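(* Consider an instance with $n$ agents, $m$ divisible items and binary additive valuations (notation as in the context). For any two stable fractional allocations $x,x'$, their profiles are equal: $\mathbf{p}(x)=\mathbf{p}(x')$ (Chebyshev distance $0$).
   Context: Agents $[n]$, items $[m]$; each agent $i$ has a set $L_i\subseteq[m]$ of liked items. A fractional allocation is a matrix $x=(x_{o,i})$ with $x_{o,i}\ge0$ and $\sum_i x_{o,i}\le1$ for each item $o$; agent $i$'s value is $\sum_{o\in L_i}x_{o,i}$. $x$ is clean if $x_{o,i}=0$ whenever $o\notin L_i$, and max-USW if it maximizes the sum of agents' values. Throughout, allocations are clean and max-USW. Profile $\mathbf{p}(x)=(h_1,\dots,h_n)$ with $h_i=\sum_o x_{o,i}$. A transfer $u\to v$: distinct agents $u=i_1,\dots,i_k=v$ ($k\ge2$), items $o_1,\dots,o_{k-1}$ with $x_{o_l,i_l}>0$ and $o_l\in L_{i_{l+1}}$, amount $0<\Delta\le\min_l x_{o_l,i_l}$, moving $\Delta$ of $o_l$ from $i_l$ to $i_{l+1}$; narrowing if $h_u-\Delta\ge h_v+\Delta$. $x$ is stable if it admits no narrowing transfer. *)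

theory Defs
  imports Main "HOL.Real"
begin

(* Agents are 0..<n, items are 0..<m. L i is the set of items liked by agent i.
   A fractional allocation is x :: nat => nat => real, x j i = amount of item o given to agent i. *)

definition frac_alloc :: "nat \<Rightarrow> nat \<Rightarrow> (nat \<Rightarrow> nat \<Rightarrow> real) \<Rightarrow> bool" where
  "frac_alloc n m x \<longleftrightarrow>
     (\<forall>j<m. \<forall>i<n. 0 \<le> x j i) \<and> (\<forall>j<m. (\<Sum>i<n. x j i) \<le> 1)"

definition agent_value :: "nat \<Rightarrow> (nat \<Rightarrow> nat set) \<Rightarrow> (nat \<Rightarrow> nat \<Rightarrow> real) \<Rightarrow> nat \<Rightarrow> real" where
  "agent_value m L x i = (\<Sum>j\<in>{..<m} \<inter> L i. x j i)"

definition usw :: "nat \<Rightarrow> nat \<Rightarrow> (nat \<Rightarrow> nat set) \<Rightarrow> (nat \<Rightarrow> nat \<Rightarrow> real) \<Rightarrow> real" where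
  "usw n m L x = (\<Sum>i<n. agent_value m L x i)"

definition clean :: "nat \<Rightarrow> nat \<Rightarrow> (nat \<Rightarrow> nat set) \<Rightarrow> (nat \<Rightarrow> nat \<Rightarrow> real) \<Rightarrow> bool" where
  "clean n m L x \<longleftrightarrow> (\<forall>j<m. \<forall>i<n. j \<notin> L i \<longrightarrow> x j i = 0)"

definition max_usw :: "nat \<Rightarrow> nat \<Rightarrow> (nat \<Rightarrow> nat set) \<Rightarrow> (nat \<Rightarrow> nat \<Rightarrow> real) \<Rightarrow> bool" where
  "max_usw n m L x \<longleftrightarrow> frac_alloc n m x \<and>
     (\<forall>y. frac_alloc n m y \<longrightarrow> usw n m L y \<le> usw n m L x)"

definition profile :: "nat \<Rightarrow> (nat \<Rightarrow> nat \<Rightarrow> real) \<Rightarrow> nat \<Rightarrow> real" where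
  "profile m x i = (\<Sum>j<m. x j i)"

definition is_transfer ::
  "nat \<Rightarrow> nat \<Rightarrow> (nat \<Rightarrow> nat set) \<Rightarrow> (nat \<Rightarrow> nat \<Rightarrow> real) \<Rightarrow> nat list \<Rightarrow> nat list \<Rightarrow> real \<Rightarrow> bool" where
  "is_transfer n m L x ags its d \<longleftrightarrow>
     2 \<le> length ags \<and> distinct ags \<and> (\<forall>a\<in>set ags. a < n) \<and>
     length its = length ags - 1 \<and> (\<forall>j\<in>set its. j < m) \<and>
     (\<forall>l < length its. 0 < x (its!l) (ags!l) \<and> its!l \<in> L (ags!(Suc l))) \<and>
     0 < d \<and> (\<forall>l < length its. d \<le> x (its!l) (ags!l))"

definition narrowing_transfer ::
  "nat \<Rightarrow> nat \<Rightarrow> (nat \<Rightarrow> nat set) \<Rightarrow> (nat \<Rightarrow> nat \<Rightarrow> real) \<Rightarrow> nat list \<Rightarrow> nat list \<Rightarrow> real \<Rightarrow> bool" where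
  "narrowing_transfer n m L x ags its d \<longleftrightarrow>
     is_transfer n m L x ags its d \<and>
     profile m x (hd ags) - d \<ge> profile m x (last ags) + d"

definition stable :: "nat \<Rightarrow> nat \<Rightarrow> (nat \<Rightarrow> nat set) \<Rightarrow> (nat \<Rightarrow> nat \<Rightarrow> real) \<Rightarrow> bool" where
  "stable n m L x \<longleftrightarrow> \<not> (\<exists>ags its d. narrowing_transfer n m L x ags its d)"

end

theory Submission
  imports Defs
begin

lemma pos_lb:
  fixes f :: "nat \<Rightarrow> real"
  shows "(\<forall>l<k. 0 < f l) \<Longrightarrow> \<exists>d>0. \<forall>l<k. d \<le> f l"
proof (induction k)
  case 0
  then show ?case by (intro exI[of _ 1]) auto
next
  case (Suc k)
  then obtain d where d: "d > 0" "\<forall>l<k. d \<le> f l" by auto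
  have "f k > 0" using Suc.prems by auto
  show ?case
    using d \<open>f k > 0\<close>
    by (intro exI[of _ "min d (f k)"]) (auto simp: less_Suc_eq)
qed

lemma stable_le:
  assumes st: "stable n m L x" and len: "2 \<le> length ags" and dist: "distinct ags"
    and agn: "\<forall>a\<in>set ags. a < n" and lits: "length its = length ags - 1"
    and itm: "\<forall>j\<in>set its. j < m"
    and steps: "\<forall>l<length its. 0 < x (its!l) (ags!l) \<and> its!l \<in> L (ags!Suc l)"
  shows "profile m x (hd ags) \<le> profile m x (last ags)"
proof (rule ccontr)
  assume "\<not> ?thesis"
  then have g: "profile m x (hd ags) - profile m x (last ags) > 0" by simp
  obtain d0 where d0: "d0 > 0" "\<forall>l<length its. d0 \<le> x (its!l) (ags!l)"
    using pos_lb[of "length its" "\<lambda>l. x (its!l) (ags!l)"] steps by auto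
  define d where "d = min d0 ((profile m x (hd ags) - profile m x (last ags)) / 2)"
  have "d > 0" using d0 g by (simp add: d_def)
  have "is_transfer n m L x ags its d"
    unfolding is_transfer_def using len dist agn lits itm steps d0 \<open>d > 0\<close>
    by (auto simp: d_def intro: order_trans[OF min.cobounded1])
  moreover have "profile m x (hd ags) - d \<ge> profile m x (last ags) + d"
  proof -
    have "d \<le> (profile m x (hd ags) - profile m x (last ags)) / 2" unfolding d_def by (rule min.cobounded2)
    then show ?thesis by (simp add: field_simps)
  qed
  ultimately have "narrowing_transfer n m L x ags its d"
    unfolding narrowing_transfer_def by simp
  then show False using st unfolding stable_def by blast
qed

lemma item_total:
  assumes fa: "frac_alloc n m x" and cl: "clean n m L x" and mx: "max_usw n m L x"
    and j: "j < m"
  shows "(\<Sum>i<n. x j i) = (if \<exists>i<n. j \<in> L i then 1 else 0)"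
proof (cases "\<exists>i<n. j \<in> L i")
  case False
  then have "\<forall>i<n. x j i = 0" using cl j unfolding clean_def by auto
  then show ?thesis using False by simp
next
  case True
  then obtain i0 where i0: "i0 < n" "j \<in> L i0" by auto
  define c where "c = 1 - (\<Sum>i<n. x j i)"
  have c0: "c \<ge> 0" using fa j unfolding frac_alloc_def c_def by auto
  define y where "y = (\<lambda>j' i. x j' i + (if j' = j \<and> i = i0 then c else 0))"
  have fy: "frac_alloc n m y"
    unfolding frac_alloc_def
  proof (intro conjI allI impI)
    fix j' i assume "j' < m" "i < n"
    then show "0 \<le> y j' i" using fa c0 unfolding frac_alloc_def y_def by auto
  next
    fix j' assume j': "j' < m"
    have "(\<Sum>i<n. y j' i) = (\<Sum>i<n. x j' i) + (\<Sum>i<n. (if j' = j \<and> i = i0 then c else 0))"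
      unfolding y_def by (simp add: sum.distrib)
    also have "(\<Sum>i<n. (if j' = j \<and> i = i0 then c else 0)) = (if j' = j then c else 0)"
      using i0 by (simp add: sum.delta)
    finally show "(\<Sum>i<n. y j' i) \<le> 1"
      using fa j' unfolding frac_alloc_def c_def by auto
  qed
  have av: "agent_value m L y i = agent_value m L x i + (if i = i0 then c else 0)" for i
  proof -
    have "agent_value m L y i = agent_value m L x i
        + (\<Sum>j'\<in>{..<m} \<inter> L i. (if j' = j \<and> i = i0 then c else 0))"
      unfolding agent_value_def y_def by (simp add: sum.distrib)
    also have "(\<Sum>j'\<in>{..<m} \<inter> L i. (if j' = j \<and> i = i0 then c else 0)) = (if i = i0 then c else 0)"
      using i0 j by (simp add: sum.delta)
    finally show ?thesis .
  qed
  have "usw n m L y = usw n m L x + c"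
    unfolding usw_def using av i0 by (simp add: sum.distrib sum.delta)
  moreover have "usw n m L y \<le> usw n m L x" using mx fy unfolding max_usw_def by auto
  ultimately have "c \<le> 0" by simp
  then show ?thesis using c0 True unfolding c_def by simp
qed

definition pth :: "(nat \<Rightarrow> nat \<Rightarrow> nat \<Rightarrow> bool) \<Rightarrow> nat \<Rightarrow> nat \<Rightarrow> nat \<Rightarrow> nat list \<Rightarrow> nat list \<Rightarrow> nat \<Rightarrow> bool" where
  "pth E n m u ags its v \<longleftrightarrow> ags \<noteq> [] \<and> hd ags = u \<and> last ags = v \<and> distinct ags \<and>
     (\<forall>a\<in>set ags. a < n) \<and> length its = length ags - 1 \<and> (\<forall>j\<in>set its. j < m) \<and>
     (\<forall>l<length its. E (ags!l) (its!l) (ags!Suc l))"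

lemma pth_ext:
  assumes p: "pth E n m u ags its a" and e: "E a j b" and b: "b < n" and j: "j < m"
  shows "\<exists>ags' its'. pth E n m u ags' its' b"
proof (cases "b \<in> set ags")
  case True
  then obtain k where k: "k < length ags" "ags!k = b" by (auto simp: in_set_conv_nth)
  have tk: "take (Suc k) ags = take k ags @ [ags!k]" using k(1) by (rule take_Suc_conv_app_nth)
  have "pth E n m u (take (Suc k) ags) (take k its) b"
    unfolding pth_def
  proof (intro conjI)
    show "take (Suc k) ags \<noteq> []" using k by auto
    show "hd (take (Suc k) ags) = u" using p unfolding pth_def by simp
    show "last (take (Suc k) ags) = b" using tk k by simp
    show "distinct (take (Suc k) ags)" using p unfolding pth_def by simp
    show "\<forall>a\<in>set (take (Suc k) ags). a < n" using p unfolding pth_def by (meson in_set_takeD)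
    show "length (take k its) = length (take (Suc k) ags) - 1" using p k unfolding pth_def by simp
    show "\<forall>j\<in>set (take k its). j < m" using p unfolding pth_def by (meson in_set_takeD)
    show "\<forall>l<length (take k its). E (take (Suc k) ags ! l) (take k its ! l) (take (Suc k) ags ! Suc l)"
      using p k unfolding pth_def by auto
  qed
  then show ?thesis by blast
next
  case False
  have ne: "ags \<noteq> []" and la: "last ags = a" and li: "length its = length ags - 1"
    using p unfolding pth_def by auto
  have la': "ags ! length its = a" using ne la li by (simp add: last_conv_nth)
  have "pth E n m u (ags @ [b]) (its @ [j]) b"
    unfolding pth_def
  proof (intro conjI)
    show "ags @ [b] \<noteq> []" by simp
    show "hd (ags @ [b]) = u" using p ne unfolding pth_def by simp
    show "last (ags @ [b]) = b" by simp
    show "distinct (ags @ [b])" using p False unfolding pth_def by simp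
    show "\<forall>a\<in>set (ags @ [b]). a < n" using p b unfolding pth_def by simp
    show "length (its @ [j]) = length (ags @ [b]) - 1" using li ne by (cases ags) auto
    show "\<forall>j\<in>set (its @ [j]). j < m" using p j unfolding pth_def by simp
    show "\<forall>l<length (its @ [j]). E ((ags @ [b]) ! l) ((its @ [j]) ! l) ((ags @ [b]) ! Suc l)"
    proof (intro allI impI)
      fix l assume l: "l < length (its @ [j])"
      show "E ((ags @ [b]) ! l) ((its @ [j]) ! l) ((ags @ [b]) ! Suc l)"
      proof (cases "l < length its")
        case True
        then have "Suc l < length ags" using li ne by (cases ags) auto
        then show ?thesis using True p unfolding pth_def by (auto simp: nth_append)
      next
        case False
        then have "l = length its" using l by simp
        moreover have "length its < length ags" using li ne by (cases ags) auto
        moreover have "Suc (length its) = length ags" using li ne by (cases ags) auto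
        ultimately show ?thesis using e la' by (simp add: nth_append)
      qed
    qed
  qed
  then show ?thesis by blast
qed


theorem theorem4:
  fixes n m :: nat and L :: "nat \<Rightarrow> nat set" and x x' :: "nat \<Rightarrow> nat \<Rightarrow> real"
  assumes "frac_alloc n m x" and "clean n m L x" and "max_usw n m L x" and "stable n m L x"
    and "frac_alloc n m x'" and "clean n m L x'" and "max_usw n m L x'" and "stable n m L x'"
  shows "\<forall>i<n. profile m x i = profile m x' i"
proof (rule ccontr)
  note fa = assms(1) and cl = assms(2) and mx = assms(3) and st = assms(4)
  note fa' = assms(5) and cl' = assms(6) and mx' = assms(7) and st' = assms(8)
  assume neq: "\<not> (\<forall>i<n. profile m x i = profile m x' i)"
  let ?h = "profile m x" and ?h' = "profile m x'"
  have T: "(\<Sum>i<n. x j i) = (\<Sum>i<n. x' j i)" if "j < m" for j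
    using item_total[OF fa cl mx that] item_total[OF fa' cl' mx' that] by simp
  have sumeq: "(\<Sum>i<n. ?h i) = (\<Sum>i<n. ?h' i)"
    unfolding profile_def
    by (subst (1 2) sum.swap) (simp add: T)
  have "\<exists>u<n. ?h u > ?h' u"
  proof (rule ccontr)
    assume "\<not> ?thesis"
    then have le: "\<forall>i\<in>{..<n}. ?h i \<le> ?h' i" by auto
    obtain i where "i < n" "?h i \<noteq> ?h' i" using neq by auto
    then have "\<exists>i\<in>{..<n}. ?h i < ?h' i" using le by force
    then have "(\<Sum>i<n. ?h i) < (\<Sum>i<n. ?h' i)"
      using sum_strict_mono_ex1[OF _ le] by blast
    then show False using sumeq by simp
  qed
  then obtain u where u: "u < n" "?h u > ?h' u" by auto
  define E where "E = (\<lambda>a j b. x j a > x' j a \<and> x j b < x' j b)"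
  define R where "R = {v. v < n \<and> (\<exists>ags its. pth E n m u ags its v)}"
  have "pth E n m u [u] [] u" unfolding pth_def using u(1) by simp
  then have uR: "u \<in> R" unfolding R_def using u(1) by blast
  have Rsub: "R \<subseteq> {..<n}" unfolding R_def by auto
  have closure: "b \<in> R" if "a \<in> R" "j < m" "b < n" "x j a > x' j a" "x j b < x' j b" for a j b
    using that pth_ext[of E n m u _ _ a j b] unfolding R_def E_def by blast
  have "\<exists>v\<in>R. ?h v < ?h' v"
  proof (rule ccontr)
    assume "\<not> ?thesis"
    then have le: "\<forall>v\<in>R. ?h' v \<le> ?h v" by auto
    have fin: "finite R" using Rsub finite_subset by blast
    have "(\<Sum>v\<in>R. ?h' v) < (\<Sum>v\<in>R. ?h v)"
      using sum_strict_mono_ex1[OF fin le] uR u by blast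
    moreover have "(\<Sum>v\<in>R. ?h v) - (\<Sum>v\<in>R. ?h' v) = (\<Sum>j<m. \<Sum>v\<in>R. x j v - x' j v)"
      unfolding profile_def sum_subtractf[symmetric]
      by (subst sum.swap) (simp add: sum_subtractf)
    moreover have "(\<Sum>v\<in>R. x j v - x' j v) \<le> 0" if j: "j < m" for j
    proof (cases "\<forall>v\<in>{..<n} - R. x j v - x' j v \<ge> 0")
      case True
      have "(\<Sum>v<n. x j v - x' j v) = 0" using T[OF j] by (simp add: sum_subtractf)
      moreover have "(\<Sum>v<n. x j v - x' j v) = (\<Sum>v\<in>R. x j v - x' j v) + (\<Sum>v\<in>{..<n} - R. x j v - x' j v)"
        using Rsub by (metis (no_types, lifting) finite_lessThan sum.subset_diff add.commute)
      moreover have "(\<Sum>v\<in>{..<n} - R. x j v - x' j v) \<ge> 0" using True by (intro sum_nonneg) auto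
      ultimately show ?thesis by linarith
    next
      case False
      then obtain b where b: "b < n" "b \<notin> R" "x j b < x' j b" by auto
      have "\<forall>a\<in>R. x j a - x' j a \<le> 0"
      proof
        fix a assume a: "a \<in> R"
        show "x j a - x' j a \<le> 0"
        proof (rule ccontr)
          assume "\<not> ?thesis"
          then have "b \<in> R" using closure[OF a j b(1) _ b(3)] by simp
          then show False using b by simp
        qed
      qed
      then show ?thesis by (simp add: sum_nonpos)
    qed
    then have "(\<Sum>j<m. \<Sum>v\<in>R. x j v - x' j v) \<le> 0" using sum_nonpos[of "{..<m}" "\<lambda>j. \<Sum>v\<in>R. x j v - x' j v"] by blast
    ultimately show False by linarith
  qed
  then obtain v where vR: "v \<in> R" and v: "?h v < ?h' v" by auto
  then obtain ags its where p: "pth E n m u ags its v" unfolding R_def by auto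
  have ne: "ags \<noteq> []" and hd: "hd ags = u" and la: "last ags = v" and dist: "distinct ags"
    and agn: "\<forall>a\<in>set ags. a < n" and li: "length its = length ags - 1"
    and itm: "\<forall>j\<in>set its. j < m" and st_e: "\<forall>l<length its. E (ags!l) (its!l) (ags!Suc l)"
    using p unfolding pth_def by auto
  have "u \<noteq> v" using u v by auto
  have len: "2 \<le> length ags"
  proof (rule ccontr)
    assume "\<not> ?thesis"
    moreover have "length ags > 0" using ne by simp
    ultimately have "length ags = 1" by linarith
    then have "hd ags = last ags" by (cases ags) (auto simp: length_0_conv)
    then show False using hd la \<open>u \<noteq> v\<close> by simp
  qed
  have idx: "ags!l < n" "its!l < m" "ags!Suc l < n" if "l < length its" for l
    using that agn itm li by auto
  have xstep: "\<forall>l<length its. 0 < x (its!l) (ags!l) \<and> its!l \<in> L (ags!Suc l)"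
  proof (intro allI impI)
    fix l assume l: "l < length its"
    have e: "x (its!l) (ags!l) > x' (its!l) (ags!l)" "x (its!l) (ags!Suc l) < x' (its!l) (ags!Suc l)"
      using st_e l unfolding E_def by auto
    have "0 \<le> x' (its!l) (ags!l)" "0 \<le> x (its!l) (ags!Suc l)"
      using fa fa' idx[OF l] unfolding frac_alloc_def by auto
    then show "0 < x (its!l) (ags!l) \<and> its!l \<in> L (ags!Suc l)"
      using e cl' idx[OF l] unfolding clean_def by force
  qed
  have h1: "?h u \<le> ?h v"
    using stable_le[OF st len dist agn li itm xstep] hd la by simp
  have x'step: "\<forall>l<length (rev its). 0 < x' (rev its!l) (rev ags!l) \<and> rev its!l \<in> L (rev ags!Suc l)"
  proof (intro allI impI)
    fix l assume l0: "l < length (rev its)"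
    define l' where "l' = length its - Suc l"
    have l': "l' < length its" using l0 unfolding l'_def by simp
    have r1: "rev its ! l = its ! l'" using l0 unfolding l'_def by (simp add: rev_nth)
    have ar: "length ags - Suc l = Suc (length ags - Suc (Suc l))" using l0 li len by simp
    have r2: "rev ags ! l = ags ! Suc l'" using l0 li len ar unfolding l'_def by (simp add: rev_nth)
    have r3: "rev ags ! Suc l = ags ! l'" using l0 li len unfolding l'_def by (simp add: rev_nth)
    have e: "x (its!l') (ags!l') > x' (its!l') (ags!l')" "x (its!l') (ags!Suc l') < x' (its!l') (ags!Suc l')"
      using st_e l' unfolding E_def by auto
    have "0 \<le> x' (its!l') (ags!l')" "0 \<le> x (its!l') (ags!Suc l')"
      using fa fa' idx[OF l'] unfolding frac_alloc_def by auto
    then show "0 < x' (rev its!l) (rev ags!l) \<and> rev its!l \<in> L (rev ags!Suc l)"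
      unfolding r1 r2 r3 using e cl idx[OF l'] unfolding clean_def by force
  qed
  have h2: "?h' v \<le> ?h' u"
    using stable_le[OF st' _ _ _ _ _ x'step] len dist agn li itm hd la ne
    by (simp add: hd_rev last_rev)
  show False using h1 h2 u v by linarith
qed

end
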